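(* The Lie algebra $\Lambda(\mathbb{Q}\mathrm{Par}_2)$ is generated by $1$, $x_1x_2$, $x_1^2x_2$, $x_1x_2^2$, and $x_1^3x_2+x_1x_2^3$.
   Context: The nonsymmetric operad $\mathrm{Par}_2$: $\mathrm{Par}_2((0))=\emptyset$, $\mathrm{Par}_2((1))=\{1\}$, and for $m\ge2$, $\mathrm{Par}_2((m))=\{x_1^ax_2^b: a,b\ge1,a+b=m\}$ (order-preserving partitions of $\{1,\dots,m\}$ into two consecutive blocks of sizes $a,b$). Partial composition: if $x_l$ is the variable whose block contains $s$, then $(x_1^{a_1}x_2^{a_2})\circ_s d$ is obtained by raising the exponent of $x_l$ by $j-1$, where $j$ is the degree of the monomial $d$; $1$ is a two-sided unit. $\Lambda(\mathbb{Q}\mathrm{Par}_2)=\bigoplus_{m\ge1}\mathbb{Q}\mathrm{Par}_2((m))$ with Lie bracket $[c,d]=\sum_{t=1}^{j}d\circ_tc-\sum_{s=1}^{k}c\circ_sd$ for $c$ of arity $k$, $d$ of arity $j$. *)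

theory Defs
  imports Complex_Main
begin

text \<open>Basis of Par_2: the unit 1 (arity 1) and monomials x_1^a x_2^b with a,b \<ge> 1.\<close>
datatype par2 = One | Mon nat nat

fun valid :: "par2 \<Rightarrow> bool" where
  "valid One = True"
| "valid (Mon a b) = (1 \<le> a \<and> 1 \<le> b)"

fun arity :: "par2 \<Rightarrow> nat" where
  "arity One = 1"
| "arity (Mon a b) = a + b"

fun pcomp :: "par2 \<Rightarrow> nat \<Rightarrow> par2 \<Rightarrow> par2" where
  "pcomp One s d = d"
| "pcomp (Mon a b) s One = Mon a b"
| "pcomp (Mon a b) s (Mon a' b') =
     (if s \<le> a then Mon (a + (a' + b') - 1) b else Mon a (b + (a' + b') - 1))"

definition supp :: "(par2 \<Rightarrow> rat) \<Rightarrow> par2 set" where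
  "supp u = {c. u c \<noteq> 0}"

definition LQPar2 :: "(par2 \<Rightarrow> rat) set" where
  "LQPar2 = {u. finite (supp u) \<and> (\<forall>c. u c \<noteq> 0 \<longrightarrow> valid c)}"

definition brb :: "par2 \<Rightarrow> par2 \<Rightarrow> par2 \<Rightarrow> rat" where
  "brb c d e = of_nat (card {t \<in> {1..arity d}. pcomp d t c = e})
             - of_nat (card {s \<in> {1..arity c}. pcomp c s d = e})"

definition bracket :: "(par2 \<Rightarrow> rat) \<Rightarrow> (par2 \<Rightarrow> rat) \<Rightarrow> (par2 \<Rightarrow> rat)" where
  "bracket u v = (\<lambda>e. \<Sum>c\<in>supp u. \<Sum>d\<in>supp v. u c * v d * brb c d e)"

definition basisvec :: "par2 \<Rightarrow> (par2 \<Rightarrow> rat)" where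
  "basisvec c = (\<lambda>e. if e = c then 1 else 0)"

inductive_set lie_gen :: "(par2 \<Rightarrow> rat) set \<Rightarrow> (par2 \<Rightarrow> rat) set" for S where
  base: "u \<in> S \<Longrightarrow> u \<in> lie_gen S"
| zero: "(\<lambda>_. 0) \<in> lie_gen S"
| add: "u \<in> lie_gen S \<Longrightarrow> v \<in> lie_gen S \<Longrightarrow> (\<lambda>e. u e + v e) \<in> lie_gen S"
| smult: "u \<in> lie_gen S \<Longrightarrow> (\<lambda>e. r * u e) \<in> lie_gen S"
| br: "u \<in> lie_gen S \<Longrightarrow> v \<in> lie_gen S \<Longrightarrow> bracket u v \<in> lie_gen S"

end

theory Submission
  imports Defs
begin

lemma bv_eq_ind: "(of_nat (if A = e then r else 0) :: rat) = of_nat r * basisvec A e"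
  by (simp add: basisvec_def)

lemma binom_step: "Suc k * (n choose Suc k) = (n - k) * (n choose k)"
proof (cases n)
  case 0 then show ?thesis by simp
next
  case (Suc m)
  have "Suc k * (n choose Suc k) = n * (m choose k)" using Suc Suc_times_binomial by simp
  also have "\<dots> = (n - k) * (n choose k)" using binomial_absorb_comp[of n k] Suc by simp
  finally show ?thesis .
qed

lemma card_split:
  assumes "A \<noteq> B"
  shows "card {t \<in> {1..r+s}. (if t \<le> r then A else B) = e}
         = (if A = e then r else 0) + (if B = e then s else 0)"
proof (cases "A = e")
  case True
  then have "{t \<in> {1..r+s}. (if t \<le> r then A else B) = e} = {1..r}" using assms by auto
  then show ?thesis using True assms by simp
next
  case F: False
  show ?thesis
  proof (cases "B = e")
    case True
    then have "{t \<in> {1..r+s}. (if t \<le> r then A else B) = e} = {r+1..r+s}" using F by auto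
    then show ?thesis using True F by simp
  next
    case False
    then have "{t \<in> {1..r+s}. (if t \<le> r then A else B) = e} = {}" using F by auto
    then show ?thesis using False F by simp
  qed
qed

lemma pcomp_MM: "pcomp (Mon r s) t (Mon p q) = (if t \<le> r then Mon (r+(p+q)-1) s else Mon r (s+(p+q)-1))"
  by simp

lemma brb_MM:
  assumes "2 \<le> p+q" "2 \<le> r+s"
  shows "brb (Mon p q) (Mon r s) e =
     of_nat r * basisvec (Mon (r+(p+q)-1) s) e + of_nat s * basisvec (Mon r (s+(p+q)-1)) e
   - of_nat p * basisvec (Mon (p+(r+s)-1) q) e - of_nat q * basisvec (Mon p (q+(r+s)-1)) e"
proof -
  have n1: "Mon (r+(p+q)-1) s \<noteq> Mon r (s+(p+q)-1)" using assms by auto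
  have n2: "Mon (p+(r+s)-1) q \<noteq> Mon p (q+(r+s)-1)" using assms by auto
  have c1: "card {t \<in> {1..arity (Mon r s)}. pcomp (Mon r s) t (Mon p q) = e}
     = (if Mon (r+(p+q)-1) s = e then r else 0) + (if Mon r (s+(p+q)-1) = e then s else 0)"
    using card_split[OF n1, of r s e] by (simp only: arity.simps pcomp_MM)
  have c2: "card {t \<in> {1..arity (Mon p q)}. pcomp (Mon p q) t (Mon r s) = e}
     = (if Mon (p+(r+s)-1) q = e then p else 0) + (if Mon p (q+(r+s)-1) = e then q else 0)"
    using card_split[OF n2, of p q e] by (simp only: arity.simps pcomp_MM)
  have oi: "\<And>A r. (of_nat (if A = e then r else 0) :: rat) = of_nat r * basisvec A e"
    by (simp add: basisvec_def)
  show ?thesis unfolding brb_def c1 c2 of_nat_add oi by (simp only: diff_diff_eq)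
qed

lemma supp_bv: "supp (basisvec c) = {c}"
  unfolding supp_def basisvec_def by auto

lemma bracket_bv: "bracket (basisvec c) (basisvec d) = brb c d"
  unfolding bracket_def supp_bv by (simp add: basisvec_def)

lemma bracket_MM:
  assumes "2 \<le> p+q" "2 \<le> r+s"
  shows "bracket (basisvec (Mon p q)) (basisvec (Mon r s)) = (\<lambda>e.
     of_nat r * basisvec (Mon (r+(p+q)-1) s) e + of_nat s * basisvec (Mon r (s+(p+q)-1)) e
   - of_nat p * basisvec (Mon (p+(r+s)-1) q) e - of_nat q * basisvec (Mon p (q+(r+s)-1)) e)"
  unfolding bracket_bv using brb_MM[OF assms] by auto

lemma lg_lin: "u \<in> lie_gen S \<Longrightarrow> v \<in> lie_gen S \<Longrightarrow> (\<lambda>e. x * u e + y * v e) \<in> lie_gen S"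
  by (intro lie_gen.add lie_gen.smult)

lemma lg_list: "(\<forall>p\<in>set xs. snd p \<in> lie_gen S) \<Longrightarrow> (\<lambda>e. \<Sum>p\<leftarrow>xs. fst p * snd p e) \<in> lie_gen S"
proof (induction xs)
  case Nil then show ?case by (simp add: lie_gen.zero)
next
  case (Cons a xs)
  then have "(\<lambda>e. 1 * (fst a * snd a e) + 1 * (\<Sum>p\<leftarrow>xs. fst p * snd p e)) \<in> lie_gen S"
    by (intro lg_lin lie_gen.smult) auto
  then show ?case by simp
qed

lemma lg_sum: "finite A \<Longrightarrow> (\<forall>c\<in>A. f c \<in> lie_gen S) \<Longrightarrow> (\<lambda>e. \<Sum>c\<in>A. g c * f c e) \<in> lie_gen S"
proof (induction A rule: finite_induct)
  case empty then show ?case by (simp add: lie_gen.zero)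
next
  case (insert x F)
  then have "(\<lambda>e. 1 * (g x * f x e) + 1 * (\<Sum>c\<in>F. g c * f c e)) \<in> lie_gen S"
    by (intro lg_lin lie_gen.smult) auto
  then show ?case using insert by simp
qed

lemma pcomp_valid: "valid c \<Longrightarrow> valid d \<Longrightarrow> valid (pcomp c s d)"
  by (cases c; cases d) auto

lemma LQ_iff: "u \<in> LQPar2 \<longleftrightarrow> finite (supp u) \<and> (\<forall>c. u c \<noteq> 0 \<longrightarrow> valid c)"
  unfolding LQPar2_def by simp

lemma bracket_supp:
  assumes "e \<in> supp (bracket u v)"
  shows "\<exists>c\<in>supp u. \<exists>d\<in>supp v. (\<exists>t\<in>{1..arity d}. pcomp d t c = e) \<or> (\<exists>t\<in>{1..arity c}. pcomp c t d = e)"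
proof -
  from assms have "(\<Sum>c\<in>supp u. \<Sum>d\<in>supp v. u c * v d * brb c d e) \<noteq> 0"
    unfolding supp_def bracket_def by simp
  then obtain c where c: "c \<in> supp u" "(\<Sum>d\<in>supp v. u c * v d * brb c d e) \<noteq> 0"
    by (meson sum.neutral)
  then obtain d where d: "d \<in> supp v" "u c * v d * brb c d e \<noteq> 0"
    by (meson sum.neutral)
  then have "brb c d e \<noteq> 0" by simp
  then have "card {t \<in> {1..arity d}. pcomp d t c = e} \<noteq>
             card {t \<in> {1..arity c}. pcomp c t d = e}"
    unfolding brb_def by simp
  then have "{t \<in> {1..arity d}. pcomp d t c = e} \<noteq> {} \<or> {t \<in> {1..arity c}. pcomp c t d = e} \<noteq> {}"
    by (metis card.empty)
  then have "(\<exists>t\<in>{1..arity d}. pcomp d t c = e) \<or> (\<exists>t\<in>{1..arity c}. pcomp c t d = e)"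
    by blast
  then show ?thesis using c d by blast
qed

lemma LQ_add: "u \<in> LQPar2 \<Longrightarrow> v \<in> LQPar2 \<Longrightarrow> (\<lambda>e. u e + v e) \<in> LQPar2"
proof -
  assume a: "u \<in> LQPar2" "v \<in> LQPar2"
  have s: "supp (\<lambda>e. u e + v e) \<subseteq> supp u \<union> supp v" unfolding supp_def by auto
  have "finite (supp (\<lambda>e. u e + v e))"
    by (rule finite_subset[OF s]) (use a in \<open>simp add: LQ_iff\<close>)
  moreover have "\<forall>c. u c + v c \<noteq> 0 \<longrightarrow> valid c"
  proof (intro allI impI)
    fix c assume "u c + v c \<noteq> 0"
    then have "u c \<noteq> 0 \<or> v c \<noteq> 0" by auto
    then show "valid c" using a unfolding LQ_iff by blast
  qed
  ultimately show ?thesis unfolding LQ_iff by simp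
qed

lemma LQ_smult: "u \<in> LQPar2 \<Longrightarrow> (\<lambda>e. r * u e) \<in> LQPar2"
proof -
  assume a: "u \<in> LQPar2"
  have s: "supp (\<lambda>e. r * u e) \<subseteq> supp u" unfolding supp_def by auto
  have "finite (supp (\<lambda>e. r * u e))"
    by (rule finite_subset[OF s]) (use a in \<open>simp add: LQ_iff\<close>)
  moreover have "\<forall>c. r * u c \<noteq> 0 \<longrightarrow> valid c"
    using a unfolding LQ_iff by simp
  ultimately show ?thesis unfolding LQ_iff by simp
qed

lemma LQ_br: "u \<in> LQPar2 \<Longrightarrow> v \<in> LQPar2 \<Longrightarrow> bracket u v \<in> LQPar2"
proof -
  assume a: "u \<in> LQPar2" "v \<in> LQPar2"
  define P where "P = (\<Union>c\<in>supp u. \<Union>d\<in>supp v.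
      (\<lambda>t. pcomp d t c) ` {1..arity d} \<union> (\<lambda>t. pcomp c t d) ` {1..arity c})"
  have fu: "finite (supp u)" "finite (supp v)" using a unfolding LQ_iff by auto
  have vu: "\<And>c. c \<in> supp u \<Longrightarrow> valid c" "\<And>c. c \<in> supp v \<Longrightarrow> valid c"
    using a unfolding LQ_iff supp_def by auto
  have sub: "supp (bracket u v) \<subseteq> P"
  proof
    fix e assume "e \<in> supp (bracket u v)"
    from bracket_supp[OF this] show "e \<in> P" unfolding P_def by blast
  qed
  have "finite P" unfolding P_def using fu by simp
  moreover have "\<forall>e\<in>P. valid e" unfolding P_def using vu pcomp_valid by blast
  ultimately have "finite (supp (bracket u v))" "\<forall>e\<in>supp (bracket u v). valid e"
    using sub finite_subset by blast+
  then show ?thesis unfolding LQ_iff supp_def by simp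
qed

lemma lie_gen_sub: "S \<subseteq> LQPar2 \<Longrightarrow> u \<in> lie_gen S \<Longrightarrow> u \<in> LQPar2"
proof -
  assume S: "S \<subseteq> LQPar2" and u: "u \<in> lie_gen S"
  from u show "u \<in> LQPar2"
  proof induction
    case (base u) then show ?case using S by auto
  next
    case zero then show ?case by (simp add: LQ_iff supp_def)
  next
    case (add u v) then show ?case by (blast intro: LQ_add)
  next
    case (smult u r) then show ?case by (blast intro: LQ_smult)
  next
    case (br u v) then show ?case by (blast intro: LQ_br)
  qed
qed


lemma lg_eq: "u \<in> lie_gen S \<Longrightarrow> (\<And>x. u x = v x) \<Longrightarrow> v \<in> lie_gen S"
proof -
  assume "u \<in> lie_gen S" "\<And>x. u x = v x"
  moreover have "u = v" using calculation(2) by (rule ext)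
  ultimately show ?thesis by simp
qed

lemma lg_comb2: "f1 \<in> lie_gen S \<Longrightarrow> f2 \<in> lie_gen S \<Longrightarrow>
   (\<lambda>x. c1 * f1 x + c2 * f2 x) \<in> lie_gen S"
  by (rule lg_lin)

lemma lg_comb3: "f1 \<in> lie_gen S \<Longrightarrow> f2 \<in> lie_gen S \<Longrightarrow> f3 \<in> lie_gen S \<Longrightarrow>
   (\<lambda>x. c1 * f1 x + c2 * f2 x + c3 * f3 x) \<in> lie_gen S"
  using lg_lin[of "\<lambda>x. c1 * f1 x + c2 * f2 x" S f3 1 c3] lg_lin[of f1 S f2 c1 c2] by simp

lemma lg_comb4: "f1 \<in> lie_gen S \<Longrightarrow> f2 \<in> lie_gen S \<Longrightarrow> f3 \<in> lie_gen S \<Longrightarrow> f4 \<in> lie_gen S \<Longrightarrow>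
   (\<lambda>x. c1 * f1 x + c2 * f2 x + c3 * f3 x + c4 * f4 x) \<in> lie_gen S"
  using lg_lin[of "\<lambda>x. c1 * f1 x + c2 * f2 x + c3 * f3 x" S f4 1 c4] lg_comb3[of f1 S f2 f3 c1 c2 c3] by simp

lemma LQ_repr: "finite (supp u) \<Longrightarrow> u = (\<lambda>e. \<Sum>c\<in>supp u. u c * basisvec c e)"
proof (rule ext)
  fix e assume fin: "finite (supp u)"
  have "(\<Sum>c\<in>supp u. u c * basisvec c e) = (\<Sum>c\<in>supp u. if c = e then u c else 0)"
    by (rule sum.cong) (auto simp: basisvec_def)
  also have "\<dots> = (if e \<in> supp u then u e else 0)" using fin by (rule sum.delta)
  also have "\<dots> = u e" by (auto simp: supp_def)
  finally show "u e = (\<Sum>c\<in>supp u. u c * basisvec c e)" by simp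
qed

lemma LQ_in_gen:
  assumes "\<And>c. valid c \<Longrightarrow> basisvec c \<in> lie_gen S" "u \<in> LQPar2"
  shows "u \<in> lie_gen S"
proof -
  have "finite (supp u)" "\<forall>c\<in>supp u. basisvec c \<in> lie_gen S"
    using assms unfolding LQ_iff supp_def by auto
  from lg_sum[OF this, of u] show ?thesis using LQ_repr[of u] \<open>finite (supp u)\<close> by simp
qed

lemma lam_two:
  fixes n a :: nat
  assumes "1 \<le> a"
  shows "of_nat a * ((-1::rat)^a * of_nat (n choose a)) + of_nat (n + 1 - a) * ((-1)^(a-1) * of_nat (n choose (a-1))) = 0"
proof -
  obtain k where k: "a = Suc k" using assms by (cases a) auto
  have "Suc k * (n choose Suc k) = (n - k) * (n choose k)" by (rule binom_step)
  then have "(of_nat (Suc k) * of_nat (n choose Suc k) :: rat) = of_nat (n - k) * of_nat (n choose k)"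
    by (metis of_nat_mult)
  moreover have "of_nat a * ((-1::rat)^a * of_nat (n choose a)) + of_nat (n + 1 - a) * ((-1)^(a-1) * of_nat (n choose (a-1)))
     = (-1)^k * (of_nat (n - k) * of_nat (n choose k) - of_nat (Suc k) * of_nat (n choose Suc k))"
    unfolding k by (simp add: algebra_simps)
  ultimately show ?thesis by simp
qed


lemma phi_formula:
  fixes m a :: nat
  assumes "1 \<le> a" "a \<le> m+3"
  shows "bracket (basisvec (Mon 1 1)) (basisvec (Mon a (m+4-a))) x =
     of_nat a * basisvec (Mon (a+1) (m+5-(a+1))) x + of_nat (m+4-a) * basisvec (Mon a (m+5-a)) x
     - basisvec (Mon (m+4) (m+5-(m+4))) x - basisvec (Mon 1 (m+5-1)) x"
proof -
  have h: "2 \<le> a + (m+4-a)" using assms by simp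
  have e1: "Mon (a + (1+1) - 1) (m+4-a) = Mon (a+1) (m+5-(a+1))" using assms by simp
  have e2: "Mon a (m+4-a + (1+1) - 1) = Mon a (m+5-a)" using assms by simp
  have e3: "Mon (1 + (a + (m+4-a)) - 1) 1 = Mon (m+4) (m+5-(m+4))" using assms by simp
  have e4: "Mon 1 (1 + (a + (m+4-a)) - 1) = Mon 1 (m+5-1)" using assms by simp
  show ?thesis
    using bracket_MM[of 1 1 a "m+4-a", OF _ h] unfolding e1 e2 e3 e4 by simp
qed

lemma v2_formula:
  fixes m :: nat
  shows "bracket (basisvec (Mon 2 1)) (basisvec (Mon 1 (m+2))) x =
     basisvec (Mon 3 (m+5-3)) x + of_nat (m+2) * basisvec (Mon 1 (m+5-1)) x
     - 2 * basisvec (Mon (m+4) (m+5-(m+4))) x - basisvec (Mon 2 (m+5-2)) x"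
proof -
  have e1: "Mon (1 + (2+1) - 1) (m+2) = Mon 3 (m+5-3)" by simp
  have e2: "Mon 1 (m+2 + (2+1) - 1) = Mon 1 (m+5-1)" by simp
  have e3: "Mon (2 + (1 + (m+2)) - 1) 1 = Mon (m+4) (m+5-(m+4))" by simp
  have e4: "Mon 2 (1 + (1 + (m+2)) - 1) = Mon 2 (m+5-2)" by simp
  show ?thesis
    using bracket_MM[of 2 1 1 "m+2"] unfolding e1 e2 e3 e4 by simp
qed


lemma deg_step:
  fixes m :: nat
  assumes IH: "\<And>a b. 1 \<le> a \<Longrightarrow> 1 \<le> b \<Longrightarrow> a + b < m + 5 \<Longrightarrow> basisvec (Mon a b) \<in> lie_gen S"
  shows "\<forall>i. 1 \<le> i \<longrightarrow> i \<le> m+4 \<longrightarrow> basisvec (Mon i (m+5-i)) \<in> lie_gen S"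
proof -
  define e where "e = (\<lambda>i. basisvec (Mon i (m+5-i)))"
  define lam where "lam = (\<lambda>i. (-1::rat)^(i-1) * of_nat ((m+3) choose (i-1)))"
  define M where "M = (of_nat m :: rat)"
  define C where "C = (\<lambda>i x. (M + 4) * e i x - (M + 3 + lam i) * e 1 x - (1 - lam i) * e 2 x)"
  define phi where "phi = (\<lambda>a x. of_nat a * e (a+1) x + of_nat (m+4-a) * e a x - e (m+4) x - e 1 x)"
  have phi_in: "phi a \<in> lie_gen S" if "1 \<le> a" "a \<le> m+3" for a
  proof -
    have "bracket (basisvec (Mon 1 1)) (basisvec (Mon a (m+4-a))) \<in> lie_gen S"
      using that by (intro lie_gen.br IH) auto
    then show ?thesis
      by (rule lg_eq) (unfold phi_def e_def, rule phi_formula[OF that])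
  qed
  have lam2: "of_nat a * lam (a+1) + of_nat (m+4-a) * lam a = 0" if "1 \<le> a" for a
  proof -
    have "m+4-a = (m+3) + 1 - a" by simp
    then show ?thesis using lam_two[OF that, of "m+3"] unfolding lam_def by simp
  qed
  have lam_1: "lam 1 = 1" unfolding lam_def by simp
  have lam_2: "lam 2 = - (M + 3)" unfolding lam_def M_def by simp
  have C1: "C 1 \<in> lie_gen S"
    by (rule lg_eq[OF lie_gen.zero]) (simp add: C_def lam_1[simplified] algebra_simps)
  have C2: "C 2 \<in> lie_gen S"
    by (rule lg_eq[OF lie_gen.zero]) (simp add: C_def lam_2 algebra_simps)
  have Cind: "k + 2 \<le> m + 4 \<Longrightarrow> C (k+1) \<in> lie_gen S \<and> C (k+2) \<in> lie_gen S" for k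
  proof (induction k)
    case 0 show ?case unfolding add_0 using C1 C2 by (rule conjI)
  next
    case (Suc k)
    then have IHk: "C (k+1) \<in> lie_gen S" "C (k+2) \<in> lie_gen S" by auto
    have kle: "k \<le> m + 1" using Suc.prems by simp
    define K where "K = (of_nat k :: rat)"
    have k3: "k + 3 = Suc (Suc (Suc k))" by simp
    have p1: "phi (k+2) \<in> lie_gen S" using kle by (intro phi_in) auto
    have p2: "phi (k+1) \<in> lie_gen S" using kle by (intro phi_in) auto
    have l1: "(K + 2) * lam (k+3) + (M + 2 - K) * lam (k+2) = 0"
      using lam2[of "k+2"] kle unfolding K_def M_def by (simp add: of_nat_diff add_ac k3)
    have l2: "(K + 1) * lam (k+2) + (M + 3 - K) * lam (k+1) = 0"
      using lam2[of "k+1"] kle unfolding K_def M_def by (simp add: of_nat_diff add_ac k3)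
    have o1: "(of_nat (m + 4 - (k+2)) :: rat) = M + 2 - K" using kle unfolding K_def M_def by (simp add: of_nat_diff)
    have o2: "(of_nat (m + 4 - (k+1)) :: rat) = M + 3 - K" using kle unfolding K_def M_def by (simp add: of_nat_diff)
    have comb: "(\<lambda>x. (M+4) * phi (k+2) x + (-(M+4)) * phi (k+1) x
                  + (-(M - 2*K + 1)) * C (k+2) x + (M + 3 - K) * C (k+1) x) \<in> lie_gen S"
      by (rule lg_comb4[OF p1 p2 IHk(2) IHk(1)])
    have Kpos: "K + 2 \<noteq> 0" unfolding K_def by (simp add: add_pos_nonneg)
    have comb2: "(\<lambda>x. (1/(K+2)) * ((M+4) * phi (k+2) x + (-(M+4)) * phi (k+1) x
                  + (-(M - 2*K + 1)) * C (k+2) x + (M + 3 - K) * C (k+1) x)) \<in> lie_gen S"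
      by (rule lie_gen.smult[OF comb])
    have "C (k + 3) \<in> lie_gen S"
    proof (rule lg_eq[OF comb2])
      fix x
      have ph1: "phi (k+2) x = (K+2) * e (k+3) x + (M+2-K) * e (k+2) x - e (m+4) x - e 1 x"
        unfolding phi_def o1 by (simp add: K_def k3)
      have ph2: "phi (k+1) x = (K+1) * e (k+2) x + (M+3-K) * e (k+1) x - e (m+4) x - e 1 x"
        unfolding phi_def o2 by (simp add: K_def)
      have main: "(M+4) * phi (k+2) x + (-(M+4)) * phi (k+1) x
                  + (-(M - 2*K + 1)) * C (k+2) x + (M + 3 - K) * C (k+1) x = (K+2) * C (k+3) x"
        unfolding ph1 ph2 C_def using l1 l2 by algebra
      show "(1/(K+2)) * ((M+4) * phi (k+2) x + (-(M+4)) * phi (k+1) x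
                  + (-(M - 2*K + 1)) * C (k+2) x + (M + 3 - K) * C (k+1) x) = C (k+3) x"
        unfolding main using Kpos by simp
    qed
    then have "C (Suc k + 2) \<in> lie_gen S" by (simp add: k3)
    then show ?case using IHk by simp
  qed
  have Call: "C i \<in> lie_gen S" if "1 \<le> i" "i \<le> m+4" for i
  proof (cases "i = 1")
    case True then show ?thesis using C1 by simp
  next
    case False
    then have "C (i - 2 + 2) \<in> lie_gen S" using Cind[of "i-2"] that by auto
    moreover have "i - 2 + 2 = i" using False that by simp
    ultimately show ?thesis by simp
  qed
  have CN: "C (m+4) \<in> lie_gen S" by (rule Call) auto
  have C3: "C 3 \<in> lie_gen S" by (rule Call) auto
  have v1: "phi 1 \<in> lie_gen S" by (rule phi_in) auto
  have v1x: "phi 1 x = e 2 x + (M + 3) * e 1 x - e (m+4) x - e 1 x" for x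
    unfolding phi_def M_def by (simp add: numeral_2_eq_2 algebra_simps)
  define v2 where "v2 = bracket (basisvec (Mon 2 1)) (basisvec (Mon 1 (m+2)))"
  have v2in: "v2 \<in> lie_gen S" unfolding v2_def by (intro lie_gen.br IH) auto
  have v2x: "v2 x = e 3 x + (M + 2) * e 1 x - 2 * e (m+4) x - e 2 x" for x
    unfolding v2_def v2_formula e_def M_def by simp
  have lam3: "lam 3 = (M + 2) * (M + 3) / 2"
  proof -
    have "of_nat 2 * lam (2+1) + of_nat (m+4-2) * lam 2 = 0" by (rule lam2) simp
    then have "2 * lam 3 + (M + 2) * lam 2 = 0" unfolding M_def by (simp add: numeral_3_eq_3 add.commute)
    then show ?thesis unfolding lam_2 by (simp add: algebra_simps)
  qed
  have lamN: "lam (m+4) = (-1)^(m+3)" unfolding lam_def by (simp add: add.commute)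
  have Mpos: "M \<ge> 0" unfolding M_def by simp
  have e1: "e 1 \<in> lie_gen S"
  proof (cases "even m")
    case True
    then have l: "lam (m+4) = -1" unfolding lamN by simp
    define c where "c = (M+2)*(M+5)*(M+4)^2"
    have cpos: "c \<noteq> 0" unfolding c_def using Mpos by simp
    have X: "(\<lambda>x. (1/c) * ((M*M+7*M+20)*(M+4) * phi 1 x + (2*(M+2)*(M+4)) * v2 x
             + ((M+4)*(M+7)) * C (m+4) x + (-2*(M+2)) * C 3 x)) \<in> lie_gen S"
      by (rule lie_gen.smult, rule lg_comb4[OF v1 v2in CN C3])
    show ?thesis
    proof (rule lg_eq[OF X])
      fix x
      have "(M*M+7*M+20)*(M+4) * phi 1 x + (2*(M+2)*(M+4)) * v2 x
             + ((M+4)*(M+7)) * C (m+4) x + (-2*(M+2)) * C 3 x = c * e 1 x"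
        unfolding v1x v2x C_def l lam3 c_def by algebra
      then show "(1/c) * ((M*M+7*M+20)*(M+4) * phi 1 x + (2*(M+2)*(M+4)) * v2 x
             + ((M+4)*(M+7)) * C (m+4) x + (-2*(M+2)) * C 3 x) = e 1 x" using cpos by simp
    qed
  next
    case False
    then have l: "lam (m+4) = 1" unfolding lamN by simp
    define c where "c = (M+4)*(M+1)*(M+6)"
    have cpos: "c \<noteq> 0" unfolding c_def using Mpos by simp
    have X: "(\<lambda>x. (1/c) * ((M+3)*(M+4) * phi 1 x + (2*(M+4)) * v2 x
             + (M+7) * C (m+4) x + (-2) * C 3 x)) \<in> lie_gen S"
      by (rule lie_gen.smult, rule lg_comb4[OF v1 v2in CN C3])
    show ?thesis
    proof (rule lg_eq[OF X])
      fix x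
      have "(M+3)*(M+4) * phi 1 x + (2*(M+4)) * v2 x
             + (M+7) * C (m+4) x + (-2) * C 3 x = c * e 1 x"
        unfolding v1x v2x C_def l lam3 c_def by algebra
      then show "(1/c) * ((M+3)*(M+4) * phi 1 x + (2*(M+4)) * v2 x
             + (M+7) * C (m+4) x + (-2) * C 3 x) = e 1 x" using cpos by simp
    qed
  qed
  have e2: "e 2 \<in> lie_gen S"
  proof -
    define l where "l = lam (m+4)"
    have l2: "l = 1 \<or> l = -1" unfolding l_def lamN by (simp add: minus_one_power_iff)
    define c where "c = M + 3 + l"
    have cpos: "c \<noteq> 0" unfolding c_def using l2 Mpos by auto
    have X: "(\<lambda>x. (1/c) * ((M+4) * phi 1 x + 1 * C (m+4) x + (-((M+4)*(M+2) - M - 3 - l)) * e 1 x)) \<in> lie_gen S"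
      by (rule lie_gen.smult, rule lg_comb3[OF v1 CN e1])
    show ?thesis
    proof (rule lg_eq[OF X])
      fix x
      have "(M+4) * phi 1 x + 1 * C (m+4) x + (-((M+4)*(M+2) - M - 3 - l)) * e 1 x = c * e 2 x"
        unfolding v1x C_def c_def l_def by algebra
      then show "(1/c) * ((M+4) * phi 1 x + 1 * C (m+4) x + (-((M+4)*(M+2) - M - 3 - l)) * e 1 x) = e 2 x"
        using cpos by simp
    qed
  qed
  show ?thesis
  proof (intro allI impI)
    fix i assume i: "1 \<le> i" "i \<le> m+4"
    have X: "(\<lambda>x. (1/(M+4)) * (1 * C i x + (M+3+lam i) * e 1 x + (1 - lam i) * e 2 x)) \<in> lie_gen S"
      by (rule lie_gen.smult, rule lg_comb3[OF Call[OF i] e1 e2])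
    have "e i \<in> lie_gen S"
    proof (rule lg_eq[OF X])
      fix x
      have "1 * C i x + (M+3+lam i) * e 1 x + (1 - lam i) * e 2 x = (M+4) * e i x"
        unfolding C_def by algebra
      then show "(1/(M+4)) * (1 * C i x + (M+3+lam i) * e 1 x + (1 - lam i) * e 2 x) = e i x"
        using Mpos by simp
    qed
    then show "basisvec (Mon i (m+5-i)) \<in> lie_gen S" unfolding e_def .
  qed
qed

lemma bv_LQ: "valid c \<Longrightarrow> basisvec c \<in> LQPar2"
  unfolding LQ_iff supp_bv by (simp add: basisvec_def)

lemma all_mon:
  fixes S
  defines "S \<equiv> {basisvec One, basisvec (Mon 1 1), basisvec (Mon 2 1), basisvec (Mon 1 2),
                  (\<lambda>e. basisvec (Mon 3 1) e + basisvec (Mon 1 3) e)}"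
  shows "1 \<le> a \<Longrightarrow> 1 \<le> b \<Longrightarrow> basisvec (Mon a b) \<in> lie_gen S"
proof -
  have g11: "basisvec (Mon 1 1) \<in> lie_gen S" unfolding S_def by (rule lie_gen.base) simp
  have g21: "basisvec (Mon 2 1) \<in> lie_gen S" unfolding S_def by (rule lie_gen.base) simp
  have g12: "basisvec (Mon 1 2) \<in> lie_gen S" unfolding S_def by (rule lie_gen.base) simp
  have g4: "(\<lambda>e. basisvec (Mon 3 1) e + basisvec (Mon 1 3) e) \<in> lie_gen S"
    unfolding S_def by (rule lie_gen.base) simp
  have X1: "bracket (basisvec (Mon 1 1)) (basisvec (Mon 2 1)) \<in> lie_gen S"
    by (rule lie_gen.br[OF g11 g21])
  have X2: "bracket (basisvec (Mon 1 1)) (basisvec (Mon 1 2)) \<in> lie_gen S"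
    by (rule lie_gen.br[OF g11 g12])
  have X1x: "bracket (basisvec (Mon 1 1)) (basisvec (Mon 2 1)) x =
      2 * basisvec (Mon 3 1) x + basisvec (Mon 2 2) x - basisvec (Mon 3 1) x - basisvec (Mon 1 3) x" for x
    using bracket_MM[of 1 1 2 1] by (simp add: numeral_2_eq_2 numeral_3_eq_3)
  have X2x: "bracket (basisvec (Mon 1 1)) (basisvec (Mon 1 2)) x =
      basisvec (Mon 2 2) x + 2 * basisvec (Mon 1 3) x - basisvec (Mon 3 1) x - basisvec (Mon 1 3) x" for x
    using bracket_MM[of 1 1 1 2] by (simp add: numeral_2_eq_2 numeral_3_eq_3)
  have m22: "basisvec (Mon 2 2) \<in> lie_gen S"
    by (rule lg_eq[OF lg_comb3[OF X1 X2 g4, of "1/2" "1/2" 0]]) (unfold X1x X2x, simp add: algebra_simps)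
  have m31: "basisvec (Mon 3 1) \<in> lie_gen S"
    by (rule lg_eq[OF lg_comb3[OF X1 X2 g4, of "1/4" "-1/4" "1/2"]]) (unfold X1x X2x, simp add: algebra_simps)
  have m13: "basisvec (Mon 1 3) \<in> lie_gen S"
    by (rule lg_eq[OF lg_comb3[OF X1 X2 g4, of "-1/4" "1/4" "1/2"]]) (unfold X1x X2x, simp add: algebra_simps)
  have "\<forall>a b. 1 \<le> a \<longrightarrow> 1 \<le> b \<longrightarrow> a + b = n \<longrightarrow> basisvec (Mon a b) \<in> lie_gen S" for n
  proof (induction n rule: less_induct)
    case (less n)
    show ?case
    proof (intro allI impI)
      fix a b :: nat assume ab: "1 \<le> a" "1 \<le> b" "a + b = n"
      show "basisvec (Mon a b) \<in> lie_gen S"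
      proof (cases "n \<le> 4")
        case True
        then have "(a = 1 \<and> b = 1) \<or> (a = 2 \<and> b = 1) \<or> (a = 1 \<and> b = 2) \<or> (a = 3 \<and> b = 1)
             \<or> (a = 2 \<and> b = 2) \<or> (a = 1 \<and> b = 3)" using ab by auto
        then show ?thesis using g11 g21 g12 m22 m31 m13 by auto
      next
        case False
        define m where "m = n - 5"
        have m: "n = m + 5" using False unfolding m_def by simp
        have IH': "\<And>a b. 1 \<le> a \<Longrightarrow> 1 \<le> b \<Longrightarrow> a + b < m + 5 \<Longrightarrow> basisvec (Mon a b) \<in> lie_gen S"
          using less.IH m by blast
        have "basisvec (Mon a (m+5-a)) \<in> lie_gen S"
          using deg_step[OF IH'] ab m by auto
        moreover have "m + 5 - a = b" using ab m by simp
        ultimately show ?thesis by simp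
      qed
    qed
  qed
  then show "1 \<le> a \<Longrightarrow> 1 \<le> b \<Longrightarrow> basisvec (Mon a b) \<in> lie_gen S" by blast
qed

theorem corollary6p3:
  shows "lie_gen {basisvec One, basisvec (Mon 1 1), basisvec (Mon 2 1), basisvec (Mon 1 2),
                  (\<lambda>e. basisvec (Mon 3 1) e + basisvec (Mon 1 3) e)} = LQPar2"
proof
  let ?S = "{basisvec One, basisvec (Mon 1 1), basisvec (Mon 2 1), basisvec (Mon 1 2),
                  (\<lambda>e. basisvec (Mon 3 1) e + basisvec (Mon 1 3) e)}"
  have g4: "(\<lambda>e. basisvec (Mon 3 1) e + basisvec (Mon 1 3) e) \<in> LQPar2"
    by (rule LQ_add; rule bv_LQ; simp)
  have "?S \<subseteq> LQPar2" using g4 by (auto intro: bv_LQ)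
  then show "lie_gen ?S \<subseteq> LQPar2" using lie_gen_sub by blast
  show "LQPar2 \<subseteq> lie_gen ?S"
  proof
    fix u assume u: "u \<in> LQPar2"
    show "u \<in> lie_gen ?S"
    proof (rule LQ_in_gen[OF _ u])
      fix c assume "valid c"
      then show "basisvec c \<in> lie_gen ?S"
      proof (cases c)
        case One then show ?thesis by (intro lie_gen.base) simp
      next
        case (Mon a b) then show ?thesis using \<open>valid c\<close> all_mon by auto
      qed
    qed
  qed
qed

end
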